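(* Every modular lattice $S$ of finite length is isomorphic to the skeleton $S(M)$ of some sublattice $M$ of $S\times S$.
   Context: For a modular lattice $M$ of finite length, an interval $[a,b]$ is \emph{atomistic} if every element of it is a join of atoms of $[a,b]$ (elements covering $a$); the \emph{skeleton} $S(M)$ is the set of least elements of the maximal (under inclusion) atomistic intervals of $M$, ordered as in $M$ (it is a lattice). *)

theory Defs
  imports Main
begin

definition modular_lattice :: "'a::lattice itself \<Rightarrow> bool" where
  "modular_lattice _ \<longleftrightarrow>
     (\<forall>x y z :: 'a. x \<le> z \<longrightarrow> sup x (inf y z) = inf (sup x y) z)"

definition finite_length :: "'a::order itself \<Rightarrow> bool" where
  "finite_length _ \<longleftrightarrow>
     (\<exists>n::nat. \<forall>C :: 'a set. Complete_Partial_Order.chain (\<le>) C \<longrightarrow> finite C \<and> card C \<le> n)"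

definition prod_le :: "'a::order \<times> 'a \<Rightarrow> 'a \<times> 'a \<Rightarrow> bool" where
  "prod_le p q \<longleftrightarrow> fst p \<le> fst q \<and> snd p \<le> snd q"

definition sublattice_prod :: "('a::lattice \<times> 'a) set \<Rightarrow> bool" where
  "sublattice_prod M \<longleftrightarrow> M \<noteq> {} \<and>
     (\<forall>p\<in>M. \<forall>q\<in>M. (inf (fst p) (fst q), inf (snd p) (snd q)) \<in> M
                  \<and> (sup (fst p) (fst q), sup (snd p) (snd q)) \<in> M)"

definition interval_in :: "'b set \<Rightarrow> ('b \<Rightarrow> 'b \<Rightarrow> bool) \<Rightarrow> 'b \<Rightarrow> 'b \<Rightarrow> 'b set" where
  "interval_in L le a b = {x\<in>L. le a x \<and> le x b}"

definition covers_in :: "'b set \<Rightarrow> ('b \<Rightarrow> 'b \<Rightarrow> bool) \<Rightarrow> 'b \<Rightarrow> 'b \<Rightarrow> bool" where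
  "covers_in L le x y \<longleftrightarrow> x \<in> L \<and> y \<in> L \<and> le x y \<and> x \<noteq> y \<and>
     \<not> (\<exists>z\<in>L. le x z \<and> le z y \<and> z \<noteq> x \<and> z \<noteq> y)"

definition atoms_in :: "'b set \<Rightarrow> ('b \<Rightarrow> 'b \<Rightarrow> bool) \<Rightarrow> 'b \<Rightarrow> 'b \<Rightarrow> 'b set" where
  "atoms_in L le a b = {x\<in>interval_in L le a b. covers_in L le a x}"

definition is_join_in :: "'b set \<Rightarrow> ('b \<Rightarrow> 'b \<Rightarrow> bool) \<Rightarrow> 'b set \<Rightarrow> 'b \<Rightarrow> bool" where
  "is_join_in K le A x \<longleftrightarrow> x \<in> K \<and> (\<forall>y\<in>A. le y x) \<and>
     (\<forall>z\<in>K. (\<forall>y\<in>A. le y z) \<longrightarrow> le x z)"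

definition atomistic_interval :: "'b set \<Rightarrow> ('b \<Rightarrow> 'b \<Rightarrow> bool) \<Rightarrow> 'b \<Rightarrow> 'b \<Rightarrow> bool" where
  "atomistic_interval L le a b \<longleftrightarrow> a \<in> L \<and> b \<in> L \<and> le a b \<and>
     (\<forall>x\<in>interval_in L le a b. \<exists>A\<subseteq>atoms_in L le a b.
         is_join_in (interval_in L le a b) le A x)"

definition maximal_atomistic_interval :: "'b set \<Rightarrow> ('b \<Rightarrow> 'b \<Rightarrow> bool) \<Rightarrow> 'b \<Rightarrow> 'b \<Rightarrow> bool" where
  "maximal_atomistic_interval L le a b \<longleftrightarrow> atomistic_interval L le a b \<and>
     (\<forall>c d. atomistic_interval L le c d \<and> interval_in L le a b \<subseteq> interval_in L le c d
        \<longrightarrow> interval_in L le c d = interval_in L le a b)"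

definition skeleton :: "'b set \<Rightarrow> ('b \<Rightarrow> 'b \<Rightarrow> bool) \<Rightarrow> 'b set" where
  "skeleton L le = {a. \<exists>b. maximal_atomistic_interval L le a b}"

end

theory Submission
  imports Defs
begin

locale mfl = L: lattice inf le less sup
  for inf (infixl "\<sqinter>" 70) and le (infix "\<preceq>" 50) and less (infix "\<prec>" 50)
    and sup (infixl "\<squnion>" 65) +
  assumes modular: "x \<preceq> z \<Longrightarrow> x \<squnion> (y \<sqinter> z) = (x \<squnion> y) \<sqinter> z"
  and finlen: "\<exists>n. \<forall>C. Complete_Partial_Order.chain (\<preceq>) C \<longrightarrow> finite C \<and> card C \<le> n"
begin

lemma dual_mfl: "mfl (\<squnion>) (\<lambda>x y. y \<preceq> x) (\<lambda>x y. y \<prec> x) (\<sqinter>)"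
proof (rule mfl.intro[OF L.dual_lattice], rule mfl_axioms.intro)
  fix x y z assume "z \<preceq> x"
  then have "z \<squnion> (y \<sqinter> x) = (z \<squnion> y) \<sqinter> x" by (rule modular)
  then show "x \<sqinter> (y \<squnion> z) = x \<sqinter> y \<squnion> z"
    by (simp add: L.inf_commute L.sup_commute)
next
  have e: "Complete_Partial_Order.chain (\<lambda>x y. y \<preceq> x) C = Complete_Partial_Order.chain (\<preceq>) C" for C
    unfolding chain_def by blast
  show "\<exists>n. \<forall>C. Complete_Partial_Order.chain (\<lambda>x y. y \<preceq> x) C \<longrightarrow> finite C \<and> card C \<le> n"
    unfolding e by (rule finlen)
qed

lemma wf_up: "wf {(y,x). x \<prec> y}"
proof (rule ccontr)
  assume "\<not> ?thesis"
  then have "\<exists>f. \<forall>i. (f (Suc i), f i) \<in> {(y,x). x \<prec> y}"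
    using wf_iff_no_infinite_down_chain by blast
  then obtain f where f0: "\<forall>i. (f (Suc i), f i) \<in> {(y,x). x \<prec> y}" by blast
  have f: "\<And>i. f i \<prec> f (Suc i)" using f0 by auto
  have lt: "i < j \<Longrightarrow> f i \<prec> f j" for i j
  proof (induction j)
    case 0 then show ?case by simp
  next
    case (Suc j)
    show ?case
    proof (cases "i = j")
      case True then show ?thesis using f by simp
    next
      case False
      then have "f i \<prec> f j" using Suc by simp
      then show ?thesis using f[of j] by (rule L.less_trans)
    qed
  qed
  have inj: "inj f"
  proof (rule injI)
    fix i j assume e: "f i = f j"
    show "i = j"
    proof (rule ccontr)
      assume "i \<noteq> j"
      then have "i < j \<or> j < i" by arith
      then show False using lt[of i j] lt[of j i] e by auto
    qed
  qed
  have ch: "Complete_Partial_Order.chain (\<preceq>) (range f)"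
    unfolding chain_def
  proof (intro ballI)
    fix a b assume "a \<in> range f" "b \<in> range f"
    then obtain i j where "a = f i" "b = f j" by auto
    moreover have "i < j \<or> i = j \<or> j < i" by arith
    ultimately show "a \<preceq> b \<or> b \<preceq> a" using lt[of i j] lt[of j i] by auto
  qed
  have "infinite (range f)" using inj finite_imageD infinite_UNIV_nat by blast
  then show False using finlen ch by blast
qed

lemma ex_max: "x \<in> V \<Longrightarrow> \<exists>m\<in>V. \<forall>v\<in>V. \<not> m \<prec> v"
proof -
  assume "x \<in> V"
  obtain z where "z \<in> V" "\<And>y. (y, z) \<in> {(y,x). x \<prec> y} \<Longrightarrow> y \<notin> V"
    using wfE_min[OF wf_up \<open>x \<in> V\<close>] by blast
  then show ?thesis by auto
qed

definition cov where "cov x y \<longleftrightarrow> x \<prec> y \<and> \<not> (\<exists>z. x \<prec> z \<and> z \<prec> y)"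

lemma cov_lt: "cov x y \<Longrightarrow> x \<prec> y" unfolding cov_def by simp

lemma cov_between: "cov x y \<Longrightarrow> x \<preceq> z \<Longrightarrow> z \<preceq> y \<Longrightarrow> z = x \<or> z = y"
proof (rule ccontr)
  assume c: "cov x y" and xz: "x \<preceq> z" and zy: "z \<preceq> y" and n: "\<not> (z = x \<or> z = y)"
  have "x \<noteq> z" using n by blast
  then have "x \<prec> z" using xz by (rule L.order.not_eq_order_implies_strict)
  moreover have "z \<noteq> y" using n by blast
  then have "z \<prec> y" using zy by (rule L.order.not_eq_order_implies_strict)
  ultimately show False using c unfolding cov_def by blast
qed

lemma L1:
  assumes c: "cov x p" and xz: "x \<preceq> z" and pz: "\<not> p \<preceq> z"
  shows "cov z (z \<squnion> p)"
  unfolding cov_def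
proof safe
  have "z \<preceq> z \<squnion> p" by simp
  moreover have "z \<noteq> z \<squnion> p" using pz by (metis L.sup.cobounded2)
  ultimately show "z \<prec> z \<squnion> p" by (simp add: L.order.not_eq_order_implies_strict)
  fix w assume zw: "z \<prec> w" and wzp: "w \<prec> z \<squnion> p"
  have zw': "z \<preceq> w" using zw by simp
  have wzp': "w \<preceq> z \<squnion> p" using wzp by simp
  have "z \<squnion> (p \<sqinter> w) = (z \<squnion> p) \<sqinter> w" using modular[OF zw'] .
  also have "\<dots> = w" using wzp' by (simp add: L.inf.absorb2)
  finally have wq: "w = z \<squnion> (p \<sqinter> w)" by simp
  have "x \<preceq> p" using cov_lt[OF c] by (rule L.less_imp_le)
  moreover have "x \<preceq> w" using xz zw' by (rule L.order.trans)
  ultimately have "x \<preceq> p \<sqinter> w" by (rule L.le_infI)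
  moreover have "p \<sqinter> w \<preceq> p" by simp
  ultimately have "p \<sqinter> w = x \<or> p \<sqinter> w = p" using cov_between[OF c] by blast
  then show False
  proof
    assume "p \<sqinter> w = x"
    then have "w = z" using wq xz by (simp add: L.sup.absorb1)
    then show False using zw by simp
  next
    assume "p \<sqinter> w = p"
    then have "p \<preceq> w" by (metis L.inf.cobounded2)
    then have "z \<squnion> p \<preceq> w" using zw' by simp
    then show False using wzp by (simp add: L.leD)
  qed
qed


lemma ex_min: "x \<in> V \<Longrightarrow> \<exists>m\<in>V. \<forall>v\<in>V. \<not> v \<prec> m"
  by (rule mfl.ex_max[OF dual_mfl])

lemma ex_cov: assumes "x \<prec> y" shows "\<exists>p. cov x p \<and> p \<preceq> y"
proof -
  let ?V = "{z. x \<prec> z \<and> z \<preceq> y}"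
  have yV: "y \<in> ?V" using assms by simp
  obtain p where p1: "p \<in> ?V" and p2: "\<forall>v\<in>?V. \<not> v \<prec> p" using ex_min[OF yV] by (elim bexE)
  have xp: "x \<prec> p" and py: "p \<preceq> y" using p1 by auto
  have nz: "\<not> (\<exists>z. x \<prec> z \<and> z \<prec> p)"
  proof
    assume "\<exists>z. x \<prec> z \<and> z \<prec> p"
    then obtain z where z: "x \<prec> z" "z \<prec> p" by (elim exE conjE)
    have "z \<preceq> p" using z(2) by (rule L.less_imp_le)
    then have "z \<preceq> y" using py by (rule L.order.trans)
    then have "z \<in> ?V" using z(1) by simp
    then show False using p2 z(2) by simp
  qed
  have "cov x p" unfolding cov_def using xp nz by (intro conjI)
  then show ?thesis using py by (intro exI conjI)
qed

lemma foldr_sup_ge: "x \<preceq> foldr (\<squnion>) ps x"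
  by (induction ps) (auto intro: L.le_supI2)

definition ustar where
  "ustar x = (SOME m. (\<exists>ps. (\<forall>p\<in>set ps. cov x p) \<and> m = foldr (\<squnion>) ps x) \<and> (\<forall>p. cov x p \<longrightarrow> p \<preceq> m))"

lemma ustar_ex: "\<exists>m. (\<exists>ps. (\<forall>p\<in>set ps. cov x p) \<and> m = foldr (\<squnion>) ps x) \<and> (\<forall>p. cov x p \<longrightarrow> p \<preceq> m)"
proof -
  let ?V = "{m. \<exists>ps. (\<forall>p\<in>set ps. cov x p) \<and> m = foldr (\<squnion>) ps x}"
  have xV: "x \<in> ?V" by (rule CollectI, rule exI[of _ "[]"]) simp
  obtain m where m1: "m \<in> ?V" and m2: "\<forall>v\<in>?V. \<not> m \<prec> v" using ex_max[OF xV] by (elim bexE)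
  obtain ps where ps1: "\<forall>p\<in>set ps. cov x p" and ps2: "m = foldr (\<squnion>) ps x" using m1 by (elim CollectE exE conjE)
  have "p \<preceq> m" if cp: "cov x p" for p
  proof -
    have "\<forall>q\<in>set (p # ps). cov x q" using ps1 cp by simp
    moreover have "p \<squnion> m = foldr (\<squnion>) (p # ps) x" using ps2 by simp
    ultimately have "p \<squnion> m \<in> ?V" by blast
    then have n: "\<not> m \<prec> p \<squnion> m" using m2 by blast
    have "m \<preceq> p \<squnion> m" by simp
    have "m = p \<squnion> m"
    proof (rule ccontr)
      assume "m \<noteq> p \<squnion> m"
      then have "m \<prec> p \<squnion> m" using \<open>m \<preceq> p \<squnion> m\<close> by (rule L.order.not_eq_order_implies_strict)
      then show False using n by contradiction
    qed
    then show ?thesis using L.sup.cobounded1[of p m] by simp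
  qed
  then show ?thesis using ps1 ps2 by blast
qed

lemma ustar_spec: "(\<exists>ps. (\<forall>p\<in>set ps. cov x p) \<and> ustar x = foldr (\<squnion>) ps x) \<and> (\<forall>p. cov x p \<longrightarrow> p \<preceq> ustar x)"
  unfolding ustar_def by (rule someI_ex[OF ustar_ex])

lemma ustar_list: "\<exists>ps. (\<forall>p\<in>set ps. cov x p) \<and> ustar x = foldr (\<squnion>) ps x"
  using ustar_spec by (rule conjunct1)

lemma cov_le_ustar: "cov x p \<Longrightarrow> p \<preceq> ustar x"
  using ustar_spec[of x] by simp

lemma ustar_ge: "x \<preceq> ustar x"
proof -
  obtain ps where "ustar x = foldr (\<squnion>) ps x" using ustar_list by blast
  then show ?thesis using foldr_sup_ge[of x ps] by simp
qed

lemma ustar_mono_aux: "\<forall>p\<in>set ps. cov x p \<Longrightarrow> x \<preceq> y \<Longrightarrow> foldr (\<squnion>) ps x \<preceq> ustar y"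
proof (induction ps)
  case Nil then show ?case using L.order.trans[OF Nil.prems(2) ustar_ge[of y]] by simp
next
  case (Cons p ps)
  have c: "cov x p" using Cons.prems by simp
  have "p \<preceq> ustar y"
  proof (cases "p \<preceq> y")
    case True then show ?thesis using ustar_ge[of y] by (rule L.order.trans)
  next
    case False
    then have "cov y (y \<squnion> p)" using L1[OF c Cons.prems(2)] by simp
    then have "y \<squnion> p \<preceq> ustar y" by (rule cov_le_ustar)
    then show ?thesis by simp
  qed
  then show ?case using Cons by simp
qed

lemma ustar_mono: "x \<preceq> y \<Longrightarrow> ustar x \<preceq> ustar y"
  using ustar_list[of x] ustar_mono_aux by metis

lemma greedy: "\<forall>p\<in>set ps. cov x p \<Longrightarrow> x \<preceq> y \<Longrightarrow>
   \<exists>c. x \<preceq> c \<and> y \<sqinter> c = x \<and> foldr (\<squnion>) ps x \<preceq> y \<squnion> c"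
proof (induction ps)
  case Nil
  then show ?case by (intro exI[of _ x]) (simp add: L.inf.absorb2)
next
  case (Cons p qs)
  then obtain c where c: "x \<preceq> c" "y \<sqinter> c = x" "foldr (\<squnion>) qs x \<preceq> y \<squnion> c" by auto
  have cp: "cov x p" using Cons.prems by simp
  show ?case
  proof (cases "p \<preceq> y \<squnion> c")
    case True
    then show ?thesis using c by (intro exI[of _ c]) simp
  next
    case False
    have "x \<preceq> (y \<squnion> c) \<sqinter> p" using c(1) cov_lt[OF cp] by (simp add: L.le_supI2 L.less_imp_le)
    moreover have "(y \<squnion> c) \<sqinter> p \<preceq> p" by simp
    ultimately have "(y \<squnion> c) \<sqinter> p = x \<or> (y \<squnion> c) \<sqinter> p = p" using cov_between[OF cp] by blast
    moreover have "(y \<squnion> c) \<sqinter> p \<noteq> p" using False by (metis L.inf.cobounded1)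
    ultimately have ycp: "p \<sqinter> (y \<squnion> c) = x" by (simp add: L.inf_commute)
    have "c \<squnion> (p \<sqinter> (y \<squnion> c)) = (c \<squnion> p) \<sqinter> (y \<squnion> c)" by (rule modular) simp
    then have e: "(c \<squnion> p) \<sqinter> (y \<squnion> c) = c" using ycp c(1) by (simp add: L.sup.absorb1)
    have "y \<sqinter> (c \<squnion> p) = (y \<sqinter> (y \<squnion> c)) \<sqinter> (c \<squnion> p)" by simp
    also have "\<dots> = y \<sqinter> ((y \<squnion> c) \<sqinter> (c \<squnion> p))" by (rule L.inf_assoc)
    also have "\<dots> = y \<sqinter> ((c \<squnion> p) \<sqinter> (y \<squnion> c))" by (simp only: L.inf_commute[of "y \<squnion> c"])
    also have "\<dots> = x" using e c(2) by simp
    finally have 1: "y \<sqinter> (c \<squnion> p) = x" .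
    have 2: "x \<preceq> c \<squnion> p" using c(1) by (simp add: L.le_supI1)
    have "y \<squnion> c \<preceq> y \<squnion> (c \<squnion> p)" by (intro L.sup_mono) simp_all
    then have "foldr (\<squnion>) qs x \<preceq> y \<squnion> (c \<squnion> p)" using c(3) L.order.trans by blast
    moreover have "p \<preceq> y \<squnion> (c \<squnion> p)" by (intro L.le_supI2 L.sup.cobounded2)
    ultimately have 3: "foldr (\<squnion>) (p # qs) x \<preceq> y \<squnion> (c \<squnion> p)" by simp
    show ?thesis using 1 2 3 by blast
  qed
qed


lemma join_covers:
  assumes xy: "x \<preceq> y" and yx: "y \<preceq> ustar x" and xz: "x \<preceq> z"
    and h: "\<And>p. cov x p \<Longrightarrow> p \<preceq> y \<Longrightarrow> p \<preceq> z"
  shows "y \<preceq> z"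
proof -
  let ?w = "z \<sqinter> y"
  have xw: "x \<preceq> ?w" using xy xz by simp
  obtain ps where ps: "\<forall>p\<in>set ps. cov x p" "ustar x = foldr (\<squnion>) ps x" using ustar_list by blast
  obtain c where c: "x \<preceq> c" "?w \<sqinter> c = x" "ustar x \<preceq> ?w \<squnion> c"
    using greedy[OF ps(1) xw] ps(2) by auto
  have "?w \<squnion> (c \<sqinter> y) = (?w \<squnion> c) \<sqinter> y" by (rule modular) simp
  also have "\<dots> = y"
  proof -
    have "y \<preceq> ?w \<squnion> c" using yx c(3) by (rule L.order.trans)
    then show ?thesis by (simp add: L.inf.absorb2)
  qed
  finally have wy: "?w \<squnion> (c \<sqinter> y) = y" .
  show ?thesis
  proof (cases "c \<sqinter> y = x")
    case True
    then have "y = ?w" using wy xw by (simp add: L.sup.absorb1)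
    then show ?thesis by (metis L.inf.cobounded1)
  next
    case False
    have "x \<preceq> c \<sqinter> y" using c(1) xy by simp
    then have "x \<prec> c \<sqinter> y" using False L.order.not_eq_order_implies_strict by metis
    then obtain q where q: "cov x q" "q \<preceq> c \<sqinter> y" using ex_cov by blast
    have qy: "q \<preceq> y" using q(2) L.le_infE by blast
    have qc: "q \<preceq> c" using q(2) L.le_infE by blast
    have "q \<preceq> z" using h[OF q(1) qy] .
    then have "q \<preceq> ?w" using qy by simp
    then have "q \<preceq> ?w \<sqinter> c" using qc by simp
    then have "q \<preceq> x" using c(2) by simp
    then show ?thesis using cov_lt[OF q(1)] by (simp add: L.leD)
  qed
qed

lemma ustar_trans:
  assumes xa: "x \<preceq> a" and ay: "a \<preceq> y" and yx: "y \<preceq> ustar x"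
  shows "y \<preceq> ustar a"
proof -
  obtain ps where ps: "\<forall>p\<in>set ps. cov x p" "ustar x = foldr (\<squnion>) ps x" using ustar_list by blast
  obtain c where c: "x \<preceq> c" "a \<sqinter> c = x" "ustar x \<preceq> a \<squnion> c"
    using greedy[OF ps(1) xa] ps(2) by auto
  have "a \<squnion> (c \<sqinter> y) = (a \<squnion> c) \<sqinter> y" by (rule modular[OF ay])
  also have "\<dots> = y"
  proof -
    have "y \<preceq> a \<squnion> c" using yx c(3) by (rule L.order.trans)
    then show ?thesis by (simp add: L.inf.absorb2)
  qed
  finally have acy: "a \<squnion> (c \<sqinter> y) = y" .
  have xy: "x \<preceq> y" using xa ay by (rule L.order.trans)
  have "a \<sqinter> (c \<sqinter> y) = (a \<sqinter> c) \<sqinter> y" by (simp add: L.inf_assoc)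
  also have "\<dots> = x" using c(2) xy by (simp add: L.inf.absorb1)
  finally have aic: "a \<sqinter> (c \<sqinter> y) = x" .
  have xay: "x \<preceq> ustar a" using xa ustar_ge[of a] by (rule L.order.trans)
  have "c \<sqinter> y \<preceq> ustar a"
  proof (rule join_covers)
    show "x \<preceq> c \<sqinter> y" using c(1) xy by simp
    show "c \<sqinter> y \<preceq> ustar x" using L.inf.cobounded2 yx by (rule L.order.trans)
    show "x \<preceq> ustar a" by (rule xay)
    fix q assume q: "cov x q" "q \<preceq> c \<sqinter> y"
    show "q \<preceq> ustar a"
    proof (cases "q \<preceq> a")
      case True
      then have "q \<preceq> x" using q(2) aic by (metis L.le_inf_iff)
      then show ?thesis using cov_lt[OF q(1)] by (simp add: L.leD)
    next
      case False
      then have "cov a (a \<squnion> q)" by (rule L1[OF q(1) xa])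
      then have "a \<squnion> q \<preceq> ustar a" by (rule cov_le_ustar)
      then show ?thesis by simp
    qed
  qed
  then have "a \<squnion> (c \<sqinter> y) \<preceq> ustar a" using ustar_ge[of a] by simp
  then show ?thesis using acy by simp
qed

definition lstar where "lstar = mfl.ustar (\<lambda>x y. y \<preceq> x) (\<lambda>x y. y \<prec> x) (\<sqinter>)"

lemma dual_cov: "mfl.cov (\<lambda>x y. y \<prec> x) x y = cov y x"
  unfolding mfl.cov_def[OF dual_mfl] cov_def by blast

lemma lstar_le: "lstar x \<preceq> x"
  unfolding lstar_def using mfl.ustar_ge[OF dual_mfl, of x] by simp

lemma cov_ge_lstar: "cov c x \<Longrightarrow> lstar x \<preceq> c"
  unfolding lstar_def using mfl.cov_le_ustar[OF dual_mfl, of x c] dual_cov by simp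

lemma lstar_list: "\<exists>cs. (\<forall>c\<in>set cs. cov c x) \<and> lstar x = foldr (\<sqinter>) cs x"
  unfolding lstar_def using mfl.ustar_list[OF dual_mfl, of x] dual_cov by simp

lemma lstar_mono: "x \<preceq> y \<Longrightarrow> lstar x \<preceq> lstar y"
  unfolding lstar_def using mfl.ustar_mono[OF dual_mfl, of x y] by simp

lemma L1d: "cov c t \<Longrightarrow> z \<preceq> t \<Longrightarrow> \<not> z \<preceq> c \<Longrightarrow> cov (z \<sqinter> c) z"
  using mfl.L1[OF dual_mfl, of t c z] dual_cov by simp

lemma foldr_inf_le: "foldr (\<sqinter>) cs t \<preceq> t"
  by (induction cs) (auto intro: L.le_infI2)

lemma K3core: "\<forall>c\<in>set cs. cov c t \<Longrightarrow> t \<preceq> ustar (foldr (\<sqinter>) cs t)"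
proof (induction cs)
  case Nil then show ?case using ustar_ge[of t] by simp
next
  case (Cons c cs)
  let ?m = "foldr (\<sqinter>) cs t"
  have ct: "cov c t" using Cons.prems by simp
  have IH: "t \<preceq> ustar ?m" using Cons by simp
  have mt: "?m \<preceq> t" by (rule foldr_inf_le)
  show ?case
  proof (cases "?m \<preceq> c")
    case True
    then have "c \<sqinter> ?m = ?m" by (simp add: L.inf.absorb2)
    then show ?thesis using IH by simp
  next
    case False
    let ?m' = "?m \<sqinter> c"
    have cm: "cov ?m' ?m" using L1d[OF ct mt False] .
    have "t \<preceq> ustar ?m'"
    proof (rule join_covers[OF mt IH])
      show "?m \<preceq> ustar ?m'" using cov_le_ustar[OF cm] .
      fix p assume cp: "cov ?m p" and pt: "p \<preceq> t"
      have mp: "?m \<preceq> p" using cov_lt[OF cp] by (rule L.less_imp_le)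
      have pc: "\<not> p \<preceq> c"
      proof
        assume "p \<preceq> c"
        then have "?m \<preceq> c" using mp by (metis L.order.trans)
        then show False using False by contradiction
      qed
      have cpc: "cov (p \<sqinter> c) p" using L1d[OF ct pt pc] .
      have pcm: "\<not> p \<sqinter> c \<preceq> ?m"
      proof
        assume h: "p \<sqinter> c \<preceq> ?m"
        have "p \<sqinter> c \<noteq> ?m"
        proof
          assume "p \<sqinter> c = ?m"
          then have "?m \<preceq> c" by (metis L.inf.cobounded2)
          then show False using False by contradiction
        qed
        then have "p \<sqinter> c \<prec> ?m" using h by (intro L.order.not_eq_order_implies_strict)
        moreover have "?m \<prec> p" using cov_lt[OF cp] .
        ultimately show False using cpc unfolding cov_def by blast
      qed
      have cmpc: "cov ((p \<sqinter> c) \<sqinter> ?m) (p \<sqinter> c)" using L1d[OF cp _ pcm] by simp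
      have "(p \<sqinter> c) \<sqinter> ?m = ?m'" using mp
        by (metis L.inf.absorb2 L.inf_assoc L.inf_commute L.inf_left_commute)
      then have cmpc': "cov ?m' (p \<sqinter> c)" using cmpc by simp
      have "?m \<preceq> ?m \<squnion> (p \<sqinter> c)" by simp
      moreover have "?m \<squnion> (p \<sqinter> c) \<preceq> p" using mp by simp
      ultimately have "?m \<squnion> (p \<sqinter> c) = ?m \<or> ?m \<squnion> (p \<sqinter> c) = p" using cov_between[OF cp] by blast
      moreover have "?m \<squnion> (p \<sqinter> c) \<noteq> ?m" using pcm by (metis L.sup.cobounded2)
      ultimately have e: "?m \<squnion> (p \<sqinter> c) = p" by blast
      have "?m \<squnion> (p \<sqinter> c) \<preceq> ustar ?m'"
        using cov_le_ustar[OF cm] cov_le_ustar[OF cmpc'] by simp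
      then show "p \<preceq> ustar ?m'" using e by simp
    qed
    then show ?thesis by (simp add: L.inf_commute)
  qed
qed

lemma K3: "t \<preceq> ustar (lstar t)"
  using lstar_list[of t] K3core by metis

lemma K3a: "lstar t \<preceq> a \<Longrightarrow> a \<preceq> t \<Longrightarrow> t \<preceq> ustar a"
  using ustar_trans K3 by blast

lemma dual_lstar: "mfl.lstar (\<squnion>) (\<lambda>x y. y \<preceq> x) (\<lambda>x y. y \<prec> x) = ustar"
  unfolding mfl.lstar_def[OF dual_mfl] by simp

lemma K3b: "a \<preceq> s \<Longrightarrow> s \<preceq> ustar a \<Longrightarrow> lstar s \<preceq> a"
  using mfl.K3a[OF dual_mfl, of s a] unfolding dual_lstar lstar_def by simp

definition Mset where "Mset = {(x,y). \<exists>s. lstar s \<preceq> x \<and> x \<preceq> s \<and> s \<preceq> y \<and> y \<preceq> ustar s}"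
definition ple where "ple p q \<longleftrightarrow> fst p \<preceq> fst q \<and> snd p \<preceq> snd q"

lemma M_block: "lstar s \<preceq> x \<Longrightarrow> x \<preceq> s \<Longrightarrow> s \<preceq> y \<Longrightarrow> y \<preceq> ustar s \<Longrightarrow> (x,y) \<in> Mset"
  unfolding Mset_def by blast

lemma M_le: "(x,y) \<in> Mset \<Longrightarrow> x \<preceq> y"
  unfolding Mset_def using L.order.trans by blast

lemma M_diag: "(b,b) \<in> Mset"
  using M_block[OF lstar_le L.order.refl L.order.refl ustar_ge] .

lemma Mchar: "(x,y) \<in> Mset \<longleftrightarrow> x \<preceq> y \<and> y \<preceq> ustar (y \<sqinter> ustar x)"
proof
  assume "(x,y) \<in> Mset"
  then obtain s where s: "lstar s \<preceq> x" "x \<preceq> s" "s \<preceq> y" "y \<preceq> ustar s" unfolding Mset_def by blast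
  have "s \<preceq> ustar x" using K3a[OF s(1) s(2)] .
  then have "s \<preceq> y \<sqinter> ustar x" using s(3) by simp
  then have "ustar s \<preceq> ustar (y \<sqinter> ustar x)" by (rule ustar_mono)
  then show "x \<preceq> y \<and> y \<preceq> ustar (y \<sqinter> ustar x)" using s L.order.trans by blast
next
  assume h: "x \<preceq> y \<and> y \<preceq> ustar (y \<sqinter> ustar x)"
  let ?s = "y \<sqinter> ustar x"
  have xs: "x \<preceq> ?s" using h ustar_ge[of x] by simp
  have "lstar ?s \<preceq> x" using K3b[OF xs] by simp
  then show "(x,y) \<in> Mset" using M_block xs h by simp
qed

lemma Mchar2: "(x,y) \<in> Mset \<longleftrightarrow> x \<preceq> y \<and> lstar (x \<squnion> lstar y) \<preceq> x"
proof
  assume "(x,y) \<in> Mset"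
  then obtain s where s: "lstar s \<preceq> x" "x \<preceq> s" "s \<preceq> y" "y \<preceq> ustar s" unfolding Mset_def by blast
  have "lstar y \<preceq> s" using K3b[OF s(3) s(4)] .
  then have "x \<squnion> lstar y \<preceq> s" using s(2) by simp
  then have "lstar (x \<squnion> lstar y) \<preceq> lstar s" by (rule lstar_mono)
  then show "x \<preceq> y \<and> lstar (x \<squnion> lstar y) \<preceq> x" using s L.order.trans by blast
next
  assume h: "x \<preceq> y \<and> lstar (x \<squnion> lstar y) \<preceq> x"
  let ?s = "x \<squnion> lstar y"
  have sy: "?s \<preceq> y" using h lstar_le[of y] by simp
  have "y \<preceq> ustar ?s" using K3a[OF _ sy] by simp
  moreover have "x \<preceq> ?s" by simp
  ultimately show "(x,y) \<in> Mset" using M_block[of ?s x y] h sy by blast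
qed

lemma M_sup: assumes "(x,y) \<in> Mset" "(u,v) \<in> Mset" shows "(x \<squnion> u, y \<squnion> v) \<in> Mset"
proof -
  have a: "x \<preceq> y" "y \<preceq> ustar (y \<sqinter> ustar x)" "u \<preceq> v" "v \<preceq> ustar (v \<sqinter> ustar u)"
    using assms Mchar by auto
  let ?T = "ustar ((y \<squnion> v) \<sqinter> ustar (x \<squnion> u))"
  have "ustar x \<preceq> ustar (x \<squnion> u)" by (rule ustar_mono) simp
  then have "y \<sqinter> ustar x \<preceq> (y \<squnion> v) \<sqinter> ustar (x \<squnion> u)"
    by (meson L.inf_mono L.sup.cobounded1)
  then have "ustar (y \<sqinter> ustar x) \<preceq> ?T" by (rule ustar_mono)
  then have 1: "y \<preceq> ?T" using a(2) by (rule L.order.trans[rotated])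
  have "ustar u \<preceq> ustar (x \<squnion> u)" by (rule ustar_mono) simp
  then have "v \<sqinter> ustar u \<preceq> (y \<squnion> v) \<sqinter> ustar (x \<squnion> u)"
    by (meson L.inf_mono L.sup.cobounded2)
  then have "ustar (v \<sqinter> ustar u) \<preceq> ?T" by (rule ustar_mono)
  then have 2: "v \<preceq> ?T" using a(4) by (rule L.order.trans[rotated])
  have "x \<squnion> u \<preceq> y \<squnion> v" using a by (meson L.sup_mono)
  then show ?thesis unfolding Mchar using 1 2 by simp
qed

lemma M_inf: assumes "(x,y) \<in> Mset" "(u,v) \<in> Mset" shows "(x \<sqinter> u, y \<sqinter> v) \<in> Mset"
proof -
  have a: "x \<preceq> y" "lstar (x \<squnion> lstar y) \<preceq> x" "u \<preceq> v" "lstar (u \<squnion> lstar v) \<preceq> u"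
    using assms Mchar2 by auto
  let ?T = "lstar ((x \<sqinter> u) \<squnion> lstar (y \<sqinter> v))"
  have "lstar (y \<sqinter> v) \<preceq> lstar y" by (rule lstar_mono) simp
  then have "(x \<sqinter> u) \<squnion> lstar (y \<sqinter> v) \<preceq> x \<squnion> lstar y"
    by (meson L.sup_mono L.inf.cobounded1)
  then have "?T \<preceq> lstar (x \<squnion> lstar y)" by (rule lstar_mono)
  then have 1: "?T \<preceq> x" using a(2) by (rule L.order.trans)
  have "lstar (y \<sqinter> v) \<preceq> lstar v" by (rule lstar_mono) simp
  then have "(x \<sqinter> u) \<squnion> lstar (y \<sqinter> v) \<preceq> u \<squnion> lstar v"
    by (meson L.sup_mono L.inf.cobounded2)
  then have "?T \<preceq> lstar (u \<squnion> lstar v)" by (rule lstar_mono)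
  then have 2: "?T \<preceq> u" using a(4) by (rule L.order.trans)
  have "x \<sqinter> u \<preceq> y \<sqinter> v" using a by (meson L.inf_mono)
  then show ?thesis unfolding Mchar2 using 1 2 by simp
qed

lemma cover_one:
  assumes cv: "covers_in Mset ple (a,b) (x,y)"
  shows "x = a \<or> y = b"
proof (rule ccontr)
  assume n: "\<not> (x = a \<or> y = b)"
  have ab: "(a,b) \<in> Mset" and xy: "(x,y) \<in> Mset" and ax: "a \<preceq> x" and "b \<preceq> y"
    using cv unfolding covers_in_def ple_def by auto
  have btw: "z = (a,b) \<or> z = (x,y)" if "z \<in> Mset" "ple (a,b) z" "ple z (x,y)" for z
    using cv that unfolding covers_in_def by blast
  have by': "b \<preceq> y" by fact
  have aab: "a \<preceq> b" using M_le[OF ab] .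
  have xxy: "x \<preceq> y" using M_le[OF xy] .
  have "(x \<sqinter> b, y \<sqinter> b) \<in> Mset" using M_inf[OF xy M_diag] .
  then have z1: "(x \<sqinter> b, b) \<in> Mset" using by' by (simp add: L.inf.absorb2)
  have "ple (a,b) (x \<sqinter> b, b)" unfolding ple_def using ax aab by simp
  moreover have "ple (x \<sqinter> b, b) (x,y)" unfolding ple_def using by' by simp
  ultimately have "(x \<sqinter> b, b) = (a,b) \<or> (x \<sqinter> b, b) = (x,y)" using btw z1 by blast
  then have xba: "x \<sqinter> b = a" using n by auto
  have "(a \<squnion> x, b \<squnion> x) \<in> Mset" using M_sup[OF ab M_diag] .
  then have z2: "(x, b \<squnion> x) \<in> Mset" using ax by (simp add: L.sup.absorb2)
  have "ple (a,b) (x, b \<squnion> x)" unfolding ple_def using ax by simp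
  moreover have "ple (x, b \<squnion> x) (x,y)" unfolding ple_def using by' xxy by simp
  ultimately have "(x, b \<squnion> x) = (a,b) \<or> (x, b \<squnion> x) = (x,y)" using btw z2 by blast
  then have ybx: "y = b \<squnion> x" using n by auto
  have "a \<noteq> x" using n by blast
  then have "a \<prec> x" using ax by (rule L.order.not_eq_order_implies_strict)
  then obtain x' where x': "cov a x'" "x' \<preceq> x" using ex_cov by blast
  have ax': "a \<preceq> x'" using cov_lt[OF x'(1)] by (rule L.less_imp_le)
  have "(a \<squnion> x', b \<squnion> x') \<in> Mset" using M_sup[OF ab M_diag] .
  then have z3: "(x', b \<squnion> x') \<in> Mset" using ax' by (simp add: L.sup.absorb2)
  have "ple (a,b) (x', b \<squnion> x')" unfolding ple_def using ax' by simp
  moreover have "ple (x', b \<squnion> x') (x,y)" unfolding ple_def using x'(2) ybx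
    by (simp add: L.le_supI2)
  ultimately have "(x', b \<squnion> x') = (a,b) \<or> (x', b \<squnion> x') = (x,y)" using btw z3 by blast
  moreover have "x' \<noteq> a" using cov_lt[OF x'(1)] by auto
  ultimately have "x' = x" by auto
  then have cax: "cov a x" using x'(1) by simp
  have "x \<preceq> y \<sqinter> ustar a" using xxy cov_le_ustar[OF cax] by simp
  then have 1: "x \<preceq> ustar (y \<sqinter> ustar a)" using ustar_ge L.order.trans by blast
  have "b \<preceq> ustar (b \<sqinter> ustar a)" using ab Mchar by blast
  moreover have "ustar (b \<sqinter> ustar a) \<preceq> ustar (y \<sqinter> ustar a)"
    using by' by (intro ustar_mono L.inf_mono) simp_all
  ultimately have 2: "b \<preceq> ustar (y \<sqinter> ustar a)" by (rule L.order.trans)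
  have "y \<preceq> ustar (y \<sqinter> ustar a)" using 1 2 ybx by simp
  moreover have "a \<preceq> y" using aab by' by (rule L.order.trans)
  ultimately have z4: "(a, y) \<in> Mset" unfolding Mchar by simp
  have "ple (a,b) (a,y)" unfolding ple_def using by' by simp
  moreover have "ple (a,y) (x,y)" unfolding ple_def using ax by simp
  ultimately have "(a,y) = (a,b) \<or> (a,y) = (x,y)" using btw z4 by blast
  then show False using n by auto
qed

lemma S1: "atomistic_interval Mset ple (lstar s, s) (s, ustar s)"
proof -
  let ?bot = "(lstar s, s)" and ?top = "(s, ustar s)"
  let ?I = "interval_in Mset ple ?bot ?top"
  have bM: "?bot \<in> Mset" by (rule M_block[of s]) (simp_all add: lstar_le ustar_ge)
  have tM: "?top \<in> Mset" by (rule M_block[of s]) (simp_all add: lstar_le ustar_ge)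
  have bt: "ple ?bot ?top" unfolding ple_def using lstar_le ustar_ge by simp
  have inI: "(x,y) \<in> ?I \<longleftrightarrow> lstar s \<preceq> x \<and> x \<preceq> s \<and> s \<preceq> y \<and> y \<preceq> ustar s" for x y
  proof
    assume "(x,y) \<in> ?I" then show "lstar s \<preceq> x \<and> x \<preceq> s \<and> s \<preceq> y \<and> y \<preceq> ustar s"
      unfolding interval_in_def ple_def by simp
  next
    assume h: "lstar s \<preceq> x \<and> x \<preceq> s \<and> s \<preceq> y \<and> y \<preceq> ustar s"
    then have "(x,y) \<in> Mset" using M_block[of s x y] by simp
    then show "(x,y) \<in> ?I" unfolding interval_in_def ple_def using h by simp
  qed
  have main: "\<exists>A\<subseteq>atoms_in Mset ple ?bot ?top. is_join_in ?I ple A z" if zI: "z \<in> ?I" for z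
  proof -
    obtain x y where z: "z = (x,y)" by (cases z)
    have zz: "lstar s \<preceq> x" "x \<preceq> s" "s \<preceq> y" "y \<preceq> ustar s" using zI inI z by auto
    let ?A = "{q \<in> atoms_in Mset ple ?bot ?top. ple q z}"
    have "is_join_in ?I ple ?A z"
      unfolding is_join_in_def
    proof (intro conjI ballI impI)
      show "z \<in> ?I" by fact
      show "ple q z" if "q \<in> ?A" for q using that by simp
      fix w assume wI: "w \<in> ?I" and ub: "\<forall>q\<in>?A. ple q w"
      obtain w1 w2 where w: "w = (w1,w2)" by (cases w)
      have ww: "lstar s \<preceq> w1" "w1 \<preceq> s" "s \<preceq> w2" "w2 \<preceq> ustar s" using wI inI w by auto
      have "x \<preceq> w1"
      proof (rule join_covers[OF zz(1)])
        show "x \<preceq> ustar (lstar s)" using L.order.trans[OF zz(2) K3[of s]] .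
        show "lstar s \<preceq> w1" by fact
        fix p assume cp: "cov (lstar s) p" and px: "p \<preceq> x"
        have lp: "lstar s \<preceq> p" using cov_lt[OF cp] by (rule L.less_imp_le)
        have ps: "p \<preceq> s" using px zz(2) by (rule L.order.trans)
        have pI: "(p, s) \<in> ?I" by (subst inI) (intro conjI lp ps L.order.refl ustar_ge)
        have "covers_in Mset ple ?bot (p, s)"
          unfolding covers_in_def
        proof (intro conjI)
          show "?bot \<in> Mset" by fact
          show "(p,s) \<in> Mset" using pI unfolding interval_in_def by simp
          show "ple ?bot (p,s)" unfolding ple_def using lp by simp
          have "lstar s \<noteq> p" using cov_lt[OF cp] by (rule L.less_imp_neq)
          then show "?bot \<noteq> (p,s)" by simp
          show "\<not> (\<exists>z'\<in>Mset. ple ?bot z' \<and> ple z' (p, s) \<and> z' \<noteq> ?bot \<and> z' \<noteq> (p, s))"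
          proof
            assume "\<exists>z'\<in>Mset. ple ?bot z' \<and> ple z' (p, s) \<and> z' \<noteq> ?bot \<and> z' \<noteq> (p, s)"
            then obtain z' where z': "ple ?bot z'" "ple z' (p,s)" "z' \<noteq> ?bot" "z' \<noteq> (p,s)" by blast
            obtain u v where zuv: "z' = (u,v)" by (cases z')
            have h1: "ple ?bot (u,v)" using z'(1) zuv by simp
            have h2: "ple (u,v) (p,s)" using z'(2) zuv by simp
            have c1: "lstar s \<preceq> u \<and> s \<preceq> v" using h1 unfolding ple_def by simp
            have c2: "u \<preceq> p \<and> v \<preceq> s" using h2 unfolding ple_def by simp
            have uv5: "(u,v) \<noteq> ?bot" using z'(3) zuv by simp
            have uv6: "(u,v) \<noteq> (p,s)" using z'(4) zuv by simp
            note uv = conjunct1[OF c1] conjunct2[OF c1] conjunct1[OF c2] conjunct2[OF c2] uv5 uv6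
            have vs: "v = s" using uv(2,4) by (rule L.order.antisym[rotated])
            have "u = lstar s \<or> u = p" using cov_between[OF cp uv(1) uv(3)] .
            then show False
            proof
              assume "u = lstar s" then show False using uv(5) vs by simp
            next
              assume "u = p" then show False using uv(6) vs by simp
            qed
          qed
        qed
        then have "(p,s) \<in> atoms_in Mset ple ?bot ?top" unfolding atoms_in_def
          by (intro CollectI conjI pI)
        moreover have "ple (p,s) z" unfolding z ple_def using px zz(3) by simp
        ultimately have "(p,s) \<in> ?A" by blast
        then have "ple (p,s) w" using ub by blast
        then show "p \<preceq> w1" using w unfolding ple_def by simp
      qed
      moreover have "y \<preceq> w2"
      proof (rule join_covers[OF zz(3) zz(4)])
        show "s \<preceq> w2" by fact
        fix p assume cp: "cov s p" and py: "p \<preceq> y"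
        have sp: "s \<preceq> p" using cov_lt[OF cp] by (rule L.less_imp_le)
        have pu: "p \<preceq> ustar s" using cov_le_ustar[OF cp] .
        have pI: "(lstar s, p) \<in> ?I" by (subst inI) (intro conjI sp pu L.order.refl lstar_le)
        have "covers_in Mset ple ?bot (lstar s, p)"
          unfolding covers_in_def
        proof (intro conjI)
          show "?bot \<in> Mset" by fact
          show "(lstar s, p) \<in> Mset" using pI unfolding interval_in_def by simp
          show "ple ?bot (lstar s, p)" unfolding ple_def using sp by simp
          have "s \<noteq> p" using cov_lt[OF cp] by (rule L.less_imp_neq)
          then show "?bot \<noteq> (lstar s, p)" by simp
          show "\<not> (\<exists>z'\<in>Mset. ple ?bot z' \<and> ple z' (lstar s, p) \<and> z' \<noteq> ?bot \<and> z' \<noteq> (lstar s, p))"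
          proof
            assume "\<exists>z'\<in>Mset. ple ?bot z' \<and> ple z' (lstar s, p) \<and> z' \<noteq> ?bot \<and> z' \<noteq> (lstar s, p)"
            then obtain z' where z': "ple ?bot z'" "ple z' (lstar s, p)" "z' \<noteq> ?bot" "z' \<noteq> (lstar s, p)" by blast
            obtain u v where zuv: "z' = (u,v)" by (cases z')
            have h1: "ple ?bot (u,v)" using z'(1) zuv by simp
            have h2: "ple (u,v) (lstar s, p)" using z'(2) zuv by simp
            have c1: "lstar s \<preceq> u \<and> s \<preceq> v" using h1 unfolding ple_def by simp
            have c2: "u \<preceq> lstar s \<and> v \<preceq> p" using h2 unfolding ple_def by simp
            have uv5: "(u,v) \<noteq> ?bot" using z'(3) zuv by simp
            have uv6: "(u,v) \<noteq> (lstar s, p)" using z'(4) zuv by simp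
            note uv = conjunct1[OF c1] conjunct2[OF c1] conjunct1[OF c2] conjunct2[OF c2] uv5 uv6
            have us: "u = lstar s" using uv(1,3) by (rule L.order.antisym[rotated])
            have "v = s \<or> v = p" using cov_between[OF cp uv(2) uv(4)] .
            then show False
            proof
              assume "v = s" then show False using uv(5) us by simp
            next
              assume "v = p" then show False using uv(6) us by simp
            qed
          qed
        qed
        then have "(lstar s, p) \<in> atoms_in Mset ple ?bot ?top" unfolding atoms_in_def
          by (intro CollectI conjI pI)
        moreover have "ple (lstar s, p) z" unfolding z ple_def using py zz(1) by simp
        ultimately have "(lstar s, p) \<in> ?A" by blast
        then have "ple (lstar s, p) w" using ub by blast
        then show "p \<preceq> w2" using w unfolding ple_def by simp
      qed
      ultimately show "ple z w" using z w unfolding ple_def by simp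
    qed
    moreover have "?A \<subseteq> atoms_in Mset ple ?bot ?top" by (rule subsetI) simp
    ultimately have "?A \<subseteq> atoms_in Mset ple ?bot ?top \<and> is_join_in ?I ple ?A z" by (intro conjI)
    then show ?thesis by (rule exI)
  qed
  show ?thesis unfolding atomistic_interval_def
    by (intro conjI bM tM bt ballI main)
qed

lemma covM_btw: "covers_in Mset ple p q \<Longrightarrow> z \<in> Mset \<Longrightarrow> ple p z \<Longrightarrow> ple z q \<Longrightarrow> z = p \<or> z = q"
  unfolding covers_in_def by blast

lemma S2:
  assumes at: "atomistic_interval Mset ple (a,b) (c,d)"
  shows "lstar (b \<sqinter> ustar a) \<preceq> a \<and> c \<preceq> b \<sqinter> ustar a \<and> b \<sqinter> ustar a \<preceq> b \<and> d \<preceq> ustar (b \<sqinter> ustar a)"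
proof -
  let ?s = "b \<sqinter> ustar a"
  let ?I = "interval_in Mset ple (a,b) (c,d)"
  have abM: "(a,b) \<in> Mset" and cdM: "(c,d) \<in> Mset" and le: "ple (a,b) (c,d)"
    and J: "\<forall>x\<in>?I. \<exists>A\<subseteq>atoms_in Mset ple (a,b) (c,d). is_join_in ?I ple A x"
    using at unfolding atomistic_interval_def by auto
  have ac: "a \<preceq> c" and bd: "b \<preceq> d" using le unfolding ple_def by auto
  have cdI: "(c,d) \<in> ?I" unfolding interval_in_def using cdM le by (simp add: ple_def)
  obtain A where A1: "A \<subseteq> atoms_in Mset ple (a,b) (c,d)" and A2: "is_join_in ?I ple A (c,d)"
    using J cdI by blast
  have aab: "a \<preceq> b" using M_le[OF abM] .
  have as: "a \<preceq> ?s" using aab ustar_ge[of a] by simp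
  have sa: "?s \<preceq> ustar a" by simp
  have bs: "b \<preceq> ustar ?s" using abM Mchar by blast
  have ls: "lstar ?s \<preceq> a" using K3b[OF as sa] .
  have sM: "(?s, ustar ?s) \<in> Mset" by (rule M_block[OF lstar_le L.order.refl ustar_ge L.order.refl])
  let ?w = "(c \<sqinter> ?s, d \<sqinter> ustar ?s)"
  have wM: "?w \<in> Mset" using M_inf[OF cdM sM] .
  have "ple (a,b) ?w" unfolding ple_def using ac as bd bs by simp
  moreover have "ple ?w (c,d)" unfolding ple_def by simp
  ultimately have wI: "?w \<in> ?I" unfolding interval_in_def using wM by simp
  have ub: "ple q ?w" if qA: "q \<in> A" for q
  proof -
    have qat: "q \<in> atoms_in Mset ple (a,b) (c,d)" using qA A1 by blast
    obtain x y where q: "q = (x,y)" by (cases q)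
    have qI: "(x,y) \<in> ?I" and cv: "covers_in Mset ple (a,b) (x,y)"
      using qat q unfolding atoms_in_def by auto
    have xyM: "(x,y) \<in> Mset" and ax: "a \<preceq> x" and "b \<preceq> y" and xc: "x \<preceq> c" and yd: "y \<preceq> d"
      using qI unfolding interval_in_def ple_def by auto
    have by': "b \<preceq> y" by fact
    have one: "x = a \<or> y = b" using cover_one[OF cv] .
    have goal: "x \<preceq> c \<sqinter> ?s \<and> y \<preceq> d \<sqinter> ustar ?s"
    proof (cases "y = b")
      case True
      have y_ok: "y \<preceq> d \<sqinter> ustar ?s" using True bd bs by simp
      have xb: "x \<preceq> b" using M_le[OF xyM] True by simp
      have "x \<preceq> ?s"
      proof (cases "x = a")
        case True then show ?thesis using as by simp
      next
        case False
        then have "a \<prec> x" using ax by (intro L.order.not_eq_order_implies_strict) auto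
        then obtain x' where x': "cov a x'" "x' \<preceq> x" using ex_cov by blast
        have ax': "a \<preceq> x'" using cov_lt[OF x'(1)] by (rule L.less_imp_le)
        have x'b: "x' \<preceq> b" using x'(2) xb by (rule L.order.trans)
        have "(a \<squnion> x', b \<squnion> x') \<in> Mset" using M_sup[OF abM M_diag] .
        then have z: "(x', b) \<in> Mset" using ax' x'b by (simp add: L.sup.absorb1 L.sup.absorb2)
        have "ple (a,b) (x',b)" unfolding ple_def using ax' by simp
        moreover have "ple (x',b) (x,y)" unfolding ple_def using x'(2) True by simp
        ultimately have "(x',b) = (a,b) \<or> (x',b) = (x,y)" using covM_btw[OF cv z] by blast
        moreover have "x' \<noteq> a" using cov_lt[OF x'(1)] by (metis L.less_irrefl)
        ultimately have "x' = x" by auto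
        then have "x \<preceq> ustar a" using cov_le_ustar[OF x'(1)] by simp
        then show ?thesis using xb by simp
      qed
      then show ?thesis using xc y_ok by simp
    next
      case False
      then have xa: "x = a" using one by simp
      have ayM: "(a,y) \<in> Mset" using xyM xa by simp
      let ?t = "y \<sqinter> ustar a"
      have yt: "y \<preceq> ustar ?t" using ayM Mchar by blast
      have "y \<preceq> ustar ?s"
      proof (cases "?t \<preceq> b")
        case True
        then have "?t \<preceq> ?s" by simp
        then have "ustar ?t \<preceq> ustar ?s" by (rule ustar_mono)
        then show ?thesis using yt L.order.trans by blast
      next
        case tb: False
        have ay: "a \<preceq> y" using M_le[OF ayM] .
        have at': "a \<preceq> ?t" using ay ustar_ge[of a] by simp
        have ta: "?t \<preceq> ustar a" by simp
        have lt: "lstar ?t \<preceq> a" using K3b[OF at' ta] .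
        have atM: "(a, ?t) \<in> Mset" by (rule M_block[OF lt at' L.order.refl ustar_ge])
        have "(a \<squnion> a, b \<squnion> ?t) \<in> Mset" using M_sup[OF abM atM] .
        then have z: "(a, b \<squnion> ?t) \<in> Mset" by simp
        have "ple (a,b) (a, b \<squnion> ?t)" unfolding ple_def by simp
        moreover have "ple (a, b \<squnion> ?t) (x,y)" unfolding ple_def using xa by' by simp
        ultimately have "(a, b \<squnion> ?t) = (a,b) \<or> (a, b \<squnion> ?t) = (x,y)" using covM_btw[OF cv z] by blast
        moreover have "b \<squnion> ?t \<noteq> b" using tb by (metis L.sup.cobounded2)
        ultimately have ybt: "y = b \<squnion> ?t" by auto
        have abt: "a \<preceq> b \<sqinter> ?t" using aab at' by (rule L.le_infI)
        have btt: "b \<sqinter> ?t \<preceq> ?t" by (rule L.inf.cobounded2)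
        have t1: "?t \<preceq> ustar (b \<sqinter> ?t)" using ustar_trans[OF abt btt ta] .
        have "b \<sqinter> ?t \<preceq> ?s" by (simp add: L.le_infI2)
        then have "ustar (b \<sqinter> ?t) \<preceq> ustar ?s" by (rule ustar_mono)
        then have "?t \<preceq> ustar ?s" using t1 L.order.trans by blast
        then have h: "b \<squnion> ?t \<preceq> ustar ?s" using bs by (intro L.le_supI)
        show ?thesis by (subst ybt) (rule h)
      qed
      then show ?thesis using xa ac as yd by simp
    qed
    then show ?thesis using q unfolding ple_def by simp
  qed
  have "ple (c,d) ?w" using A2 wI ub unfolding is_join_in_def by blast
  then have "c \<preceq> ?s" "d \<preceq> ustar ?s" unfolding ple_def by auto
  then show ?thesis using ls by simp
qed

lemma block_mem: "(x,y) \<in> interval_in Mset ple (lstar s, s) (s, ustar s) \<longleftrightarrow>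
    lstar s \<preceq> x \<and> x \<preceq> s \<and> s \<preceq> y \<and> y \<preceq> ustar s"
proof
  assume "(x,y) \<in> interval_in Mset ple (lstar s, s) (s, ustar s)"
  then show "lstar s \<preceq> x \<and> x \<preceq> s \<and> s \<preceq> y \<and> y \<preceq> ustar s"
    unfolding interval_in_def ple_def by simp
next
  assume h: "lstar s \<preceq> x \<and> x \<preceq> s \<and> s \<preceq> y \<and> y \<preceq> ustar s"
  then have "(x,y) \<in> Mset" using M_block[of s x y] by simp
  then show "(x,y) \<in> interval_in Mset ple (lstar s, s) (s, ustar s)"
    unfolding interval_in_def ple_def using h by simp
qed

lemma atom_sub:
  assumes at: "atomistic_interval Mset ple (a,b) (c,d)"
  shows "\<exists>s. interval_in Mset ple (a,b) (c,d) \<subseteq> interval_in Mset ple (lstar s, s) (s, ustar s)"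
proof -
  let ?s = "b \<sqinter> ustar a"
  have S: "lstar ?s \<preceq> a" "c \<preceq> ?s" "?s \<preceq> b" "d \<preceq> ustar ?s" using S2[OF at] by auto
  have "z \<in> interval_in Mset ple (lstar ?s, ?s) (?s, ustar ?s)"
    if zI: "z \<in> interval_in Mset ple (a,b) (c,d)" for z
  proof -
    obtain u v where z: "z = (u,v)" by (cases z)
    have uv: "a \<preceq> u" "u \<preceq> c" "b \<preceq> v" "v \<preceq> d" using zI z unfolding interval_in_def ple_def by auto
    have "lstar ?s \<preceq> u" using S(1) uv(1) by (rule L.order.trans)
    moreover have "u \<preceq> ?s" using uv(2) S(2) by (rule L.order.trans)
    moreover have "?s \<preceq> v" using S(3) uv(3) by (rule L.order.trans)
    moreover have "v \<preceq> ustar ?s" using uv(4) S(4) by (rule L.order.trans)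
    ultimately show ?thesis unfolding z block_mem by simp
  qed
  then show ?thesis by blast
qed

lemma block_inj:
  assumes "interval_in Mset ple (lstar s, s) (s, ustar s) \<subseteq> interval_in Mset ple (lstar t, t) (t, ustar t)"
  shows "s = t"
proof -
  have "(lstar s, s) \<in> interval_in Mset ple (lstar s, s) (s, ustar s)"
    unfolding block_mem by (simp add: lstar_le ustar_ge)
  then have "(lstar s, s) \<in> interval_in Mset ple (lstar t, t) (t, ustar t)" using assms by blast
  then have ts: "t \<preceq> s" unfolding block_mem by simp
  have "(s, ustar s) \<in> interval_in Mset ple (lstar s, s) (s, ustar s)"
    unfolding block_mem by (simp add: lstar_le ustar_ge)
  then have "(s, ustar s) \<in> interval_in Mset ple (lstar t, t) (t, ustar t)" using assms by blast
  then have st: "s \<preceq> t" unfolding block_mem by simp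
  show ?thesis using st ts by (rule L.order.antisym)
qed

lemma maxat_block: "maximal_atomistic_interval Mset ple (lstar s, s) (s, ustar s)"
  unfolding maximal_atomistic_interval_def
proof (intro conjI allI impI)
  show "atomistic_interval Mset ple (lstar s, s) (s, ustar s)" by (rule S1)
  fix c d
  assume h: "atomistic_interval Mset ple c d \<and>
     interval_in Mset ple (lstar s, s) (s, ustar s) \<subseteq> interval_in Mset ple c d"
  obtain c1 c2 where c: "c = (c1,c2)" by (cases c)
  obtain d1 d2 where d: "d = (d1,d2)" by (cases d)
  have at: "atomistic_interval Mset ple (c1,c2) (d1,d2)" using h c d by simp
  obtain t where t: "interval_in Mset ple (c1,c2) (d1,d2) \<subseteq> interval_in Mset ple (lstar t, t) (t, ustar t)"
    using atom_sub[OF at] by blast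
  have sub: "interval_in Mset ple (lstar s, s) (s, ustar s) \<subseteq> interval_in Mset ple (c1,c2) (d1,d2)"
    using h c d by simp
  then have "s = t" using t by (intro block_inj) (rule subset_trans)
  then show "interval_in Mset ple c d = interval_in Mset ple (lstar s, s) (s, ustar s)"
    using sub t c d by blast
qed

lemma ple_antisym: "ple p q \<Longrightarrow> ple q p \<Longrightarrow> p = q"
  unfolding ple_def by (cases p, cases q) (simp add: L.order.antisym)

lemma maxat_bottom:
  assumes mx: "maximal_atomistic_interval Mset ple p q"
  shows "\<exists>s. p = (lstar s, s)"
proof -
  obtain a b where p: "p = (a,b)" by (cases p)
  obtain c d where q: "q = (c,d)" by (cases q)
  have at: "atomistic_interval Mset ple (a,b) (c,d)" using mx p q
    unfolding maximal_atomistic_interval_def by simp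
  obtain t where t: "interval_in Mset ple (a,b) (c,d) \<subseteq> interval_in Mset ple (lstar t, t) (t, ustar t)"
    using atom_sub[OF at] by blast
  have "interval_in Mset ple (lstar t, t) (t, ustar t) = interval_in Mset ple (a,b) (c,d)"
    using mx p q S1[of t] t unfolding maximal_atomistic_interval_def by blast
  then have eq: "interval_in Mset ple (lstar t, t) (t, ustar t) = interval_in Mset ple p q" using p q by simp
  have pM: "p \<in> Mset" and pq: "ple p q" using at p q unfolding atomistic_interval_def by auto
  have "ple p p" unfolding ple_def by simp
  then have "p \<in> interval_in Mset ple p q" unfolding interval_in_def using pM pq by simp
  then have "p \<in> interval_in Mset ple (lstar t, t) (t, ustar t)" using eq by simp
  then have 1: "ple (lstar t, t) p" unfolding interval_in_def by simp
  have "(lstar t, t) \<in> interval_in Mset ple (lstar t, t) (t, ustar t)"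
    unfolding block_mem by (simp add: lstar_le ustar_ge)
  then have "(lstar t, t) \<in> interval_in Mset ple p q" using eq by simp
  then have 2: "ple p (lstar t, t)" unfolding interval_in_def by simp
  show ?thesis using ple_antisym[OF 2 1] by blast
qed

lemma skeleton_eq: "skeleton Mset ple = range (\<lambda>s. (lstar s, s))"
proof
  show "skeleton Mset ple \<subseteq> range (\<lambda>s. (lstar s, s))"
    unfolding skeleton_def using maxat_bottom by blast
  show "range (\<lambda>s. (lstar s, s)) \<subseteq> skeleton Mset ple"
    unfolding skeleton_def using maxat_block by blast
qed

end


theorem theorem7p3:
  assumes "modular_lattice TYPE('a::lattice)"
      and "finite_length TYPE('a)"
  shows "\<exists>M :: ('a \<times> 'a) set. sublattice_prod M \<and>
           (\<exists>f :: 'a \<Rightarrow> 'a \<times> 'a. bij_betw f UNIV (skeleton M prod_le) \<and>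
              (\<forall>x y. x \<le> y \<longleftrightarrow> prod_le (f x) (f y)))"
proof -
  interpret m: mfl "inf :: 'a \<Rightarrow> 'a \<Rightarrow> 'a" "(\<le>)" "(<)" sup
  proof (rule mfl.intro)
    show "class.lattice (inf :: 'a \<Rightarrow> 'a \<Rightarrow> 'a) (\<le>) (<) sup" by unfold_locales
    show "mfl_axioms (inf :: 'a \<Rightarrow> 'a \<Rightarrow> 'a) (\<le>) sup"
    proof (rule mfl_axioms.intro)
      fix x y z :: 'a assume "x \<le> z"
      then show "sup x (inf y z) = inf (sup x y) z"
        using assms(1) unfolding modular_lattice_def by blast
    next
      show "\<exists>n. \<forall>C :: 'a set. Complete_Partial_Order.chain (\<le>) C \<longrightarrow> finite C \<and> card C \<le> n"
        using assms(2) unfolding finite_length_def by blast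
    qed
  qed
  have pe: "m.ple = prod_le" by (intro ext) (simp add: m.ple_def prod_le_def)
  let ?f = "\<lambda>s::'a. (m.lstar s, s)"
  have sub: "sublattice_prod m.Mset"
    unfolding sublattice_prod_def
  proof (intro conjI ballI)
    show "m.Mset \<noteq> {}" using m.M_diag by blast
    fix p q assume "p \<in> m.Mset" "q \<in> m.Mset"
    then show "(inf (fst p) (fst q), inf (snd p) (snd q)) \<in> m.Mset"
      and "(sup (fst p) (fst q), sup (snd p) (snd q)) \<in> m.Mset"
      using m.M_inf[of "fst p" "snd p" "fst q" "snd q"] m.M_sup[of "fst p" "snd p" "fst q" "snd q"] by simp_all
  qed
  have bij: "bij_betw ?f UNIV (skeleton m.Mset prod_le)"
    unfolding pe[symmetric] m.skeleton_eq
    by (rule bij_betw_imageI) (auto simp: inj_on_def)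
  have ord: "\<forall>x y. x \<le> y \<longleftrightarrow> prod_le (?f x) (?f y)"
    unfolding prod_le_def using m.lstar_mono by auto
  show ?thesis using sub bij ord by blast
qed

end
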